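(* Let $\mathbb{K}$ be a field, let $P_1, P_2 \in \mathbb{K}[X]$ be irreducible polynomials with $P_1' \neq 0$ and $P_2' \neq 0$, and let $k \geq 1$ be an integer. Then the rings $\mathbb{K}[X]/(P_1^k)$ and $\mathbb{K}[X]/(P_2^k)$ are isomorphic if and only if the fields $\mathbb{K}[X]/(P_1)$ and $\mathbb{K}[X]/(P_2)$ are isomorphic (as rings).
   Context: $\mathbb{K}$ is an arbitrary field; $P'$ denotes the formal derivative (for irreducible $P$, $P'\neq0$ means $P$ is separable). The rings $\mathbb{K}[X]/(P_i^k)$ are local with residue field $\mathbb{K}[X]/(P_i)$. *)

theory Defs
  imports "HOL-Computational_Algebra.Polynomial" "HOL-Algebra.QuotRing"
begin

text \<open>The polynomial ring K[X] (type-class polynomials over a field 'a)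
  viewed as an HOL-Algebra ring structure, so that quotient rings
  K[X]/(P) can be formed with Quot and compared with ring isomorphism.\<close>
definition Kx :: "'a::field poly ring" where
  "Kx = \<lparr>carrier = UNIV, mult = (*), one = 1, zero = 0, add = (+)\<rparr>"

end

theory Submission
  imports Defs
begin

definition cls :: "'a::field poly \<Rightarrow> 'a poly \<Rightarrow> 'a poly set" where
  "cls P a = {b. P dvd b - a}"

lemma PIdl_Kx: "PIdl\<^bsub>Kx\<^esub> P = {b. P dvd b}"
  unfolding cgenideal_def Kx_def by (auto simp: dvd_def mult.commute)

lemma rcos_Kx0: "I +>\<^bsub>Kx\<^esub> a = {h + a | h. h \<in> I}"
  unfolding a_r_coset_def r_coset_def Kx_def by auto

lemma rcos_Kx: "PIdl\<^bsub>Kx\<^esub> P +>\<^bsub>Kx\<^esub> a = cls P a"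
proof -
  have "{h + a |h. h \<in> {b. P dvd b}} = {b. P dvd b - a}"
  proof (rule Set.set_eqI)
    fix x
    show "x \<in> {h + a |h. h \<in> {b. P dvd b}} \<longleftrightarrow> x \<in> {b. P dvd b - a}"
    proof
      assume "x \<in> {b. P dvd b - a}"
      then have "x = (x - a) + a" "P dvd x - a" by simp_all
      then show "x \<in> {h + a |h. h \<in> {b. P dvd b}}" by blast
    qed auto
  qed
  then show ?thesis unfolding rcos_Kx0 PIdl_Kx cls_def .
qed

lemma one_Kx: "one Kx = 1" by (simp add: Kx_def)

lemma cls_eq: "cls P a = cls P b \<longleftrightarrow> P dvd a - b"
proof
  assume "cls P a = cls P b"
  moreover have "a \<in> cls P a" by (simp add: cls_def)
  ultimately show "P dvd a - b" by (simp add: cls_def)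
next
  assume "P dvd a - b"
  have "P dvd x - a \<longleftrightarrow> P dvd x - b" for x
  proof -
    have "x - a = (x - b) - (a - b)" "x - b = (x - a) + (a - b)" by simp_all
    then show ?thesis using \<open>P dvd a - b\<close> by (metis dvd_add dvd_diff)
  qed
  then show "cls P a = cls P b" unfolding cls_def by simp
qed

lemma carrier_Q: "carrier (Kx Quot PIdl\<^bsub>Kx\<^esub> P) = range (cls P)"
  unfolding FactRing_def A_RCOSETS_def RCOSETS_def
  by (auto simp: rcos_Kx[symmetric] a_r_coset_def Kx_def)

lemma one_Q: "\<one>\<^bsub>Kx Quot PIdl\<^bsub>Kx\<^esub> P\<^esub> = cls P 1"
  unfolding FactRing_def by (simp add: rcos_Kx one_Kx)

lemma mult_Kx: "x \<otimes>\<^bsub>Kx\<^esub> y = x * y" by (simp add: Kx_def)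
lemma add_Kx: "x \<oplus>\<^bsub>Kx\<^esub> y = x + y" by (simp add: Kx_def)
lemma carrier_Kx: "carrier Kx = UNIV" by (simp add: Kx_def)

lemma mult_Q: "cls P a \<otimes>\<^bsub>Kx Quot PIdl\<^bsub>Kx\<^esub> P\<^esub> cls P b = cls P (a * b)"
proof -
  have 1: "\<And>x y. x \<in> cls P a \<Longrightarrow> y \<in> cls P b \<Longrightarrow> cls P (x*y) = cls P (a*b)"
  proof -
    fix x y assume "x \<in> cls P a" "y \<in> cls P b"
    then have "P dvd x - a" "P dvd y - b" by (simp_all add: cls_def)
    then obtain u v where "x - a = P*u" "y - b = P*v" unfolding dvd_def by blast
    then have "x = a + P*u" "y = b + P*v" by (simp_all add: algebra_simps)
    then show "cls P (x*y) = cls P (a*b)" unfolding cls_eq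
      by (simp add: algebra_simps)
  qed
  have 2: "a \<in> cls P a" "b \<in> cls P b" by (auto simp: cls_def)
  have "(\<Union>x\<in>cls P a. \<Union>y\<in>cls P b. cls P (x*y)) = cls P (a*b)"
    using 1 2 by blast
  then show ?thesis
    unfolding FactRing_def rcoset_mult_def by (simp add: rcos_Kx mult_Kx)
qed

lemma add_Q: "cls P a \<oplus>\<^bsub>Kx Quot PIdl\<^bsub>Kx\<^esub> P\<^esub> cls P b = cls P (a + b)"
proof -
  have "{x + y | x y. x \<in> cls P a \<and> y \<in> cls P b} = cls P (a + b)"
  proof (rule Set.set_eqI)
    fix z show "z \<in> {x + y | x y. x \<in> cls P a \<and> y \<in> cls P b} \<longleftrightarrow> z \<in> cls P (a + b)"
    proof
      assume "z \<in> {x + y | x y. x \<in> cls P a \<and> y \<in> cls P b}"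
      then obtain x y where "z = x + y" "P dvd x - a" "P dvd y - b" by (auto simp: cls_def)
      moreover have "x + y - (a + b) = (x - a) + (y - b)" by simp
      ultimately show "z \<in> cls P (a + b)" unfolding cls_def by (metis dvd_add mem_Collect_eq)
    next
      assume "z \<in> cls P (a + b)"
      then have "z = (z - b) + b" "z - b \<in> cls P a" "b \<in> cls P b" by (simp_all add: cls_def algebra_simps)
      then show "z \<in> {x + y | x y. x \<in> cls P a \<and> y \<in> cls P b}" by blast
    qed
  qed
  then have "(\<Union>x\<in>cls P a. \<Union>y\<in>cls P b. {x + y}) = cls P (a + b)" by blast
  then show ?thesis
    unfolding FactRing_def set_add_def set_mult_def by (simp add: add_Kx)
qed

lemma cring_Kx: "cring (Kx :: 'a::field poly ring)"
  apply (rule cringI)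
    apply (rule abelian_groupI)
  apply (auto simp: Kx_def algebra_simps)
  apply (rule_tac x="- x" in exI, simp)
  apply (rule comm_monoidI)
  by (auto simp: algebra_simps)

lemma ideal_PIdl: "ideal (PIdl\<^bsub>Kx\<^esub> (P :: 'a::field poly)) Kx"
  using cring_Kx by (rule cring.cgenideal_ideal) (simp add: carrier_Kx)

lemma ring_Q: "ring (Kx Quot PIdl\<^bsub>Kx\<^esub> (P :: 'a::field poly))"
  using ideal_PIdl by (rule ideal.quotient_is_ring)

definition chom :: "'a::field poly \<Rightarrow> 'a poly \<Rightarrow> ('a poly \<Rightarrow> 'a poly) \<Rightarrow> bool" where
  "chom P Q f \<longleftrightarrow> (\<forall>a b. Q dvd f (a+b) - (f a + f b)) \<and> (\<forall>a b. Q dvd f (a*b) - f a * f b)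
     \<and> Q dvd f 1 - 1 \<and> (\<forall>a b. P dvd a - b \<longrightarrow> Q dvd f a - f b)"

lemma iso_from_chom:
  fixes P Q :: "'a::field poly"
  assumes f: "chom P Q f" and g: "chom Q P g"
    and gf: "\<And>a. P dvd g (f a) - a" and fg: "\<And>c. Q dvd f (g c) - c"
  shows "Kx Quot PIdl\<^bsub>Kx\<^esub> P \<simeq> Kx Quot PIdl\<^bsub>Kx\<^esub> Q"
proof -
  define h where "h = (\<lambda>C. cls Q (f (SOME a. C = cls P a)))"
  have hc: "h (cls P a) = cls Q (f a)" for a
  proof -
    have "\<exists>a'. cls P a = cls P a'" by blast
    then have "cls P a = cls P (SOME a'. cls P a = cls P a')" by (rule someI_ex)
    then have "P dvd (SOME a'. cls P a = cls P a') - a" by (simp add: cls_eq dvd_diff_commute)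
    then have "Q dvd f (SOME a'. cls P a = cls P a') - f a" using f unfolding chom_def by blast
    then show ?thesis unfolding h_def cls_eq .
  qed
  have "h \<in> ring_iso (Kx Quot PIdl\<^bsub>Kx\<^esub> P) (Kx Quot PIdl\<^bsub>Kx\<^esub> Q)"
  proof (rule ring_iso_memI)
    fix x assume "x \<in> carrier (Kx Quot PIdl\<^bsub>Kx\<^esub> P)"
    then obtain a where "x = cls P a" by (auto simp: carrier_Q)
    then show "h x \<in> carrier (Kx Quot PIdl\<^bsub>Kx\<^esub> Q)" by (simp add: hc carrier_Q)
  next
    fix x y assume "x \<in> carrier (Kx Quot PIdl\<^bsub>Kx\<^esub> P)" "y \<in> carrier (Kx Quot PIdl\<^bsub>Kx\<^esub> P)"
    then obtain a b where ab: "x = cls P a" "y = cls P b" by (auto simp: carrier_Q)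
    have "Q dvd f (a*b) - f a * f b" using f unfolding chom_def by blast
    then show "h (x \<otimes>\<^bsub>Kx Quot PIdl\<^bsub>Kx\<^esub> P\<^esub> y) = h x \<otimes>\<^bsub>Kx Quot PIdl\<^bsub>Kx\<^esub> Q\<^esub> h y"
      by (simp add: ab mult_Q hc cls_eq)
    have "Q dvd f (a+b) - (f a + f b)" using f unfolding chom_def by blast
    then show "h (x \<oplus>\<^bsub>Kx Quot PIdl\<^bsub>Kx\<^esub> P\<^esub> y) = h x \<oplus>\<^bsub>Kx Quot PIdl\<^bsub>Kx\<^esub> Q\<^esub> h y"
      by (simp add: ab add_Q hc cls_eq)
  next
    have "Q dvd f 1 - 1" using f unfolding chom_def by blast
    then show "h \<one>\<^bsub>Kx Quot PIdl\<^bsub>Kx\<^esub> P\<^esub> = \<one>\<^bsub>Kx Quot PIdl\<^bsub>Kx\<^esub> Q\<^esub>"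
      by (simp add: one_Q hc cls_eq)
  next
    show "bij_betw h (carrier (Kx Quot PIdl\<^bsub>Kx\<^esub> P)) (carrier (Kx Quot PIdl\<^bsub>Kx\<^esub> Q))"
      unfolding bij_betw_def
    proof
      show "inj_on h (carrier (Kx Quot PIdl\<^bsub>Kx\<^esub> P))"
      proof (rule inj_onI)
        fix x y assume "x \<in> carrier (Kx Quot PIdl\<^bsub>Kx\<^esub> P)" "y \<in> carrier (Kx Quot PIdl\<^bsub>Kx\<^esub> P)"
          and hxy: "h x = h y"
        then obtain a b where ab: "x = cls P a" "y = cls P b" by (auto simp: carrier_Q)
        with hxy have "Q dvd f a - f b" by (simp add: hc cls_eq)
        then have "P dvd g (f a) - g (f b)" using g unfolding chom_def by blast
        moreover have "a - b = (g (f b) - b) - (g (f a) - g (f b)) - (g (f a) - a) + 2 * (g (f a) - g (f b))"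
          by (simp add: algebra_simps)
        ultimately have "P dvd a - b" using gf
          by (metis dvd_add dvd_diff dvd_mult)
        then show "x = y" by (simp add: ab cls_eq)
      qed
      show "h ` carrier (Kx Quot PIdl\<^bsub>Kx\<^esub> P) = carrier (Kx Quot PIdl\<^bsub>Kx\<^esub> Q)"
      proof
        show "h ` carrier (Kx Quot PIdl\<^bsub>Kx\<^esub> P) \<subseteq> carrier (Kx Quot PIdl\<^bsub>Kx\<^esub> Q)"
          by (auto simp: carrier_Q hc)
        show "carrier (Kx Quot PIdl\<^bsub>Kx\<^esub> Q) \<subseteq> h ` carrier (Kx Quot PIdl\<^bsub>Kx\<^esub> P)"
        proof
          fix y assume "y \<in> carrier (Kx Quot PIdl\<^bsub>Kx\<^esub> Q)"
          then obtain c where c: "y = cls Q c" by (auto simp: carrier_Q)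
          have "y = h (cls P (g c))" using fg[of c] by (simp add: c hc cls_eq dvd_diff_commute)
          then show "y \<in> h ` carrier (Kx Quot PIdl\<^bsub>Kx\<^esub> P)" by (auto simp: carrier_Q)
        qed
      qed
    qed
  qed
  then show ?thesis unfolding is_ring_iso_def by blast
qed

lemma chom_from_iso:
  fixes P Q :: "'a::field poly"
  assumes h: "h \<in> ring_iso (Kx Quot PIdl\<^bsub>Kx\<^esub> P) (Kx Quot PIdl\<^bsub>Kx\<^esub> Q)"
  shows "\<exists>f. chom P Q f \<and> (\<forall>a. cls Q (f a) = h (cls P a))"
proof -
  define f where "f = (\<lambda>a. SOME b. h (cls P a) = cls Q b)"
  have fc: "cls Q (f a) = h (cls P a)" for a
  proof -
    have "h (cls P a) \<in> carrier (Kx Quot PIdl\<^bsub>Kx\<^esub> Q)"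
      using ring_iso_memE(1)[OF h] by (simp add: carrier_Q)
    then have "\<exists>b. h (cls P a) = cls Q b" by (auto simp: carrier_Q)
    then show ?thesis unfolding f_def by (metis (mono_tags, lifting) someI_ex)
  qed
  have cP: "cls P a \<in> carrier (Kx Quot PIdl\<^bsub>Kx\<^esub> P)" for a by (simp add: carrier_Q)
  have "chom P Q f" unfolding chom_def
  proof (intro conjI allI impI)
    fix a b
    have "cls Q (f (a+b)) = cls Q (f a + f b)"
      using ring_iso_memE(3)[OF h cP cP, of a b] by (simp add: fc[symmetric] add_Q)
    then show "Q dvd f (a+b) - (f a + f b)" by (simp add: cls_eq)
    have "cls Q (f (a*b)) = cls Q (f a * f b)"
      using ring_iso_memE(2)[OF h cP cP, of a b] by (simp add: fc[symmetric] mult_Q)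
    then show "Q dvd f (a*b) - f a * f b" by (simp add: cls_eq)
  next
    have "cls Q (f 1) = cls Q 1"
      using ring_iso_memE(4)[OF h] by (simp add: fc[symmetric] one_Q)
    then show "Q dvd f 1 - 1" by (simp add: cls_eq)
  next
    fix a b assume "P dvd a - b"
    then have "cls P a = cls P b" by (simp add: cls_eq)
    then have "cls Q (f a) = cls Q (f b)" by (simp add: fc)
    then show "Q dvd f a - f b" by (simp add: cls_eq)
  qed
  with fc show ?thesis by blast
qed

lemma iso_iff_chom:
  fixes P Q :: "'a::field poly"
  shows "Kx Quot PIdl\<^bsub>Kx\<^esub> P \<simeq> Kx Quot PIdl\<^bsub>Kx\<^esub> Q \<longleftrightarrow>
    (\<exists>f g. chom P Q f \<and> chom Q P g \<and> (\<forall>a. P dvd g (f a) - a) \<and> (\<forall>c. Q dvd f (g c) - c))"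
proof
  assume "Kx Quot PIdl\<^bsub>Kx\<^esub> P \<simeq> Kx Quot PIdl\<^bsub>Kx\<^esub> Q"
  then obtain h where h: "h \<in> ring_iso (Kx Quot PIdl\<^bsub>Kx\<^esub> P) (Kx Quot PIdl\<^bsub>Kx\<^esub> Q)"
    unfolding is_ring_iso_def by blast
  define h' where "h' = inv_into (carrier (Kx Quot PIdl\<^bsub>Kx\<^esub> P)) h"
  have h': "h' \<in> ring_iso (Kx Quot PIdl\<^bsub>Kx\<^esub> Q) (Kx Quot PIdl\<^bsub>Kx\<^esub> P)"
    unfolding h'_def by (rule ring_iso_set_sym[OF ring_Q h])
  obtain f where f: "chom P Q f" "\<And>a. cls Q (f a) = h (cls P a)" using chom_from_iso[OF h] by blast
  obtain g where g: "chom Q P g" "\<And>a. cls P (g a) = h' (cls Q a)" using chom_from_iso[OF h'] by blast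
  have bij: "bij_betw h (carrier (Kx Quot PIdl\<^bsub>Kx\<^esub> P)) (carrier (Kx Quot PIdl\<^bsub>Kx\<^esub> Q))"
    using ring_iso_memE(5)[OF h] .
  have "P dvd g (f a) - a" for a
  proof -
    have "cls P (g (f a)) = h' (h (cls P a))" by (simp add: g f)
    also have "\<dots> = cls P a" unfolding h'_def
      by (rule inv_into_f_f[OF bij_betw_imp_inj_on[OF bij]]) (simp add: carrier_Q)
    finally show ?thesis by (simp add: cls_eq)
  qed
  moreover have "Q dvd f (g c) - c" for c
  proof -
    have "cls Q (f (g c)) = h (h' (cls Q c))" by (simp add: g f)
    also have "\<dots> = cls Q c" unfolding h'_def
      by (rule f_inv_into_f) (metis bij bij_betw_def carrier_Q rangeI)
    finally show ?thesis by (simp add: cls_eq dvd_diff_commute)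
  qed
  ultimately show "\<exists>f g. chom P Q f \<and> chom Q P g \<and> (\<forall>a. P dvd g (f a) - a) \<and> (\<forall>c. Q dvd f (g c) - c)"
    using f g by blast
next
  assume "\<exists>f g. chom P Q f \<and> chom Q P g \<and> (\<forall>a. P dvd g (f a) - a) \<and> (\<forall>c. Q dvd f (g c) - c)"
  then show "Kx Quot PIdl\<^bsub>Kx\<^esub> P \<simeq> Kx Quot PIdl\<^bsub>Kx\<^esub> Q"
    using iso_from_chom by blast
qed

lemma bezout_ex:
  fixes A B :: "'a::field poly"
  shows "\<exists>U V D. D = U*A + V*B \<and> D dvd A \<and> D dvd B"
proof (induction "euclidean_size B" arbitrary: A B rule: less_induct)
  case less
  show ?case
  proof (cases "B = 0")
    case True
    then show ?thesis by (rule_tac x=1 in exI, rule_tac x=0 in exI, auto)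
  next
    case False
    then have "euclidean_size (A mod B) < euclidean_size B" by (rule mod_size_less)
    from less[OF this, of B] obtain U V D where
      UV: "D = U * B + V * (A mod B)" "D dvd B" "D dvd A mod B" by blast
    have Am: "A mod B = A - (A div B) * B" by (simp add: minus_div_mult_eq_mod)
    have "D = V * A + (U - V * (A div B)) * B" using UV(1) unfolding Am by (simp add: algebra_simps)
    moreover have "D dvd A"
    proof -
      have "A = (A div B) * B + A mod B" by simp
      moreover have "D dvd (A div B) * B" using UV(2) by simp
      ultimately show ?thesis using UV(3) by (metis dvd_add)
    qed
    ultimately show ?thesis using UV(2) by blast
  qed
qed

lemma irred_inv:
  fixes P Q :: "'a::field poly"
  assumes "irreducible P" "\<not> P dvd Q"
  shows "\<exists>U. P dvd U * Q - 1"
proof -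
  obtain U V D where D: "D = U*Q + V*P" "D dvd Q" "D dvd P" using bezout_ex by blast
  then obtain E where E: "P = D * E" by (auto simp: dvd_def)
  have "is_unit D \<or> is_unit E" using assms(1) E by (simp add: irreducible_def)
  moreover have "\<not> is_unit E"
  proof
    assume "is_unit E"
    then have "P dvd D" using E by (metis dvd_mult_unit_iff dvd_refl mult.commute)
    then show False using D(2) assms(2) dvd_trans by blast
  qed
  ultimately have "is_unit D" by blast
  then obtain w where w: "1 = D * w" by (auto simp: dvd_def)
  have "U * w * Q - 1 = - (V * w) * P" using w D(1) by (simp add: algebra_simps)
  then have "P dvd U * w * Q - 1" by simp
  then show ?thesis by blast
qed

lemma irred_prime:
  fixes P a b :: "'a::field poly"
  assumes "irreducible P" "P dvd a * b"
  shows "P dvd a \<or> P dvd b"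
proof (rule disjCI)
  assume "\<not> P dvd b"
  then obtain U where U: "P dvd U * b - 1" using irred_inv[OF assms(1)] by blast
  have "a = U * (a * b) - a * (U * b - 1)" by (simp add: algebra_simps)
  then show "P dvd a" using U assms(2) by (metis dvd_diff dvd_mult)
qed

lemma irred_pow:
  fixes P a :: "'a::field poly"
  assumes "irreducible P" "P dvd a ^ n"
  shows "P dvd a"
  using assms(2)
proof (induction n)
  case 0
  then show ?case using assms(1) by (simp add: irreducible_def)
next
  case (Suc n)
  then show ?case using irred_prime[OF assms(1)] by auto
qed

lemma dvd_pcompose_diff:
  fixes f Y Z :: "'a::comm_ring_1 poly"
  shows "(Y - Z) dvd pcompose f Y - pcompose f Z"
proof (induction f)
  case 0
  then show ?case by simp
next
  case (pCons a f)
  have "pcompose (pCons a f) Y - pcompose (pCons a f) Z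
      = (Y - Z) * pcompose f Y + Z * (pcompose f Y - pcompose f Z)"
    by (simp add: pcompose_pCons algebra_simps)
  then show ?case using pCons(2) by simp
qed

lemma taylor2:
  fixes f Y H :: "'a::idom poly"
  shows "H^2 dvd pcompose f (Y + H) - pcompose f Y - pcompose (pderiv f) Y * H"
proof (induction f)
  case 0
  then show ?case by simp
next
  case (pCons a f)
  have d: "H dvd pcompose f (Y + H) - pcompose f Y" using dvd_pcompose_diff[of "Y+H" Y f] by simp
  have "pcompose (pCons a f) (Y + H) - pcompose (pCons a f) Y - pcompose (pderiv (pCons a f)) Y * H
     = Y * (pcompose f (Y + H) - pcompose f Y - pcompose (pderiv f) Y * H)
       + H * (pcompose f (Y + H) - pcompose f Y)"
    by (simp add: pcompose_pCons pderiv_pCons pcompose_add algebra_simps)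
  moreover have "H^2 dvd H * (pcompose f (Y + H) - pcompose f Y)"
    using d by (simp add: power2_eq_square)
  ultimately show ?case using pCons(2) by (metis dvd_add dvd_mult)
qed

lemma hensel:
  fixes P :: "'a::field poly"
  assumes irr: "irreducible P" and sep: "pderiv P \<noteq> 0" and k: "k \<ge> 1"
  shows "\<exists>Y. P dvd Y - [:0,1:] \<and> P^k dvd pcompose P Y"
  using k
proof (induction k rule: dec_induct)
  case base
  show ?case by (rule exI[of _ "[:0,1:]"]) simp
next
  case (step k)
  then obtain Y where Y: "P dvd Y - [:0,1:]" "P^k dvd pcompose P Y" by blast
  have "\<not> P dvd pderiv P"
  proof
    assume "P dvd pderiv P"
    then have "degree P \<le> degree (pderiv P)" using sep by (rule dvd_imp_degree_le)
    moreover have "degree (pderiv P) \<le> degree P - 1"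
      by (rule degree_le) (auto simp: coeff_pderiv coeff_eq_0)
    moreover have "degree P \<noteq> 0"
    proof
      assume "degree P = 0"
      then have "pderiv P = 0" by (intro poly_eqI) (simp add: coeff_pderiv coeff_eq_0)
      then show False using sep by simp
    qed
    ultimately show False by simp
  qed
  then obtain U where U: "P dvd U * pderiv P - 1" using irred_inv[OF irr] by blast
  define H where "H = - (pcompose P Y * U)"
  define Y' where "Y' = Y + H"
  have "P dvd P^k" using step(1) by (intro dvd_power) simp
  then have PdY: "P dvd pcompose P Y" using Y(2) by (rule dvd_trans)
  have "P dvd H" unfolding H_def using PdY by simp
  then have "P dvd Y' - [:0,1:]" unfolding Y'_def using Y(1)
    by (metis add_diff_eq diff_add_eq dvd_add)
  moreover have "P^(Suc k) dvd pcompose P Y'"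
  proof -
    have t: "H^2 dvd pcompose P Y' - pcompose P Y - pcompose (pderiv P) Y * H"
      unfolding Y'_def by (rule taylor2)
    have "P^k * P^k dvd H^2" unfolding H_def power2_eq_square using Y(2)
      by (simp add: mult_dvd_mono)
    moreover have "P^(Suc k) dvd P^k * P^k"
      unfolding power_add[symmetric] using step(1) by (intro le_imp_power_dvd) simp
    ultimately have A: "P^(Suc k) dvd pcompose P Y' - pcompose P Y - pcompose (pderiv P) Y * H"
      using t dvd_trans by blast
    have "P dvd pcompose (pderiv P) Y - pderiv P"
      using dvd_pcompose_diff[of Y "[:0,1:]" "pderiv P"] Y(1) dvd_trans by force
    then have "P dvd U * (pcompose (pderiv P) Y - pderiv P)" by (rule dvd_mult)
    moreover have "U * pcompose (pderiv P) Y - 1 = (U * pderiv P - 1) + U * (pcompose (pderiv P) Y - pderiv P)"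
      by (simp add: algebra_simps)
    ultimately have "P dvd U * pcompose (pderiv P) Y - 1" using U by (metis dvd_add)
    then have "P dvd 1 - U * pcompose (pderiv P) Y" by (simp add: dvd_diff_commute)
    then have B: "P^k * P dvd pcompose P Y * (1 - U * pcompose (pderiv P) Y)"
      using Y(2) by (rule mult_dvd_mono[rotated])
    then have B: "P^(Suc k) dvd pcompose P Y * (1 - U * pcompose (pderiv P) Y)"
      by (simp add: mult.commute)
    have "pcompose P Y' = (pcompose P Y' - pcompose P Y - pcompose (pderiv P) Y * H)
        + pcompose P Y * (1 - U * pcompose (pderiv P) Y)"
      unfolding H_def by (simp add: algebra_simps)
    then show ?thesis using A B by (metis dvd_add)
  qed
  ultimately show ?case by blast
qed

definition Psi :: "'a::field poly \<Rightarrow> 'a poly \<Rightarrow> 'a poly poly \<Rightarrow> 'a poly" where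
  "Psi P Y F = fold_coeffs (\<lambda>a r. pcompose a Y + P * r) F 0"

lemma Psi_0 [simp]: "Psi P Y 0 = 0"
  by (simp add: Psi_def)

lemma Psi_pCons: "Psi P Y (pCons a F) = pcompose a Y + P * Psi P Y F"
  by (cases "F = 0 \<and> a = 0") (auto simp add: Psi_def)

lemma Psi_add: "Psi P Y (F + G) = Psi P Y F + Psi P Y G"
proof (induction F G rule: poly_induct2)
  case 0
  then show ?case by simp
next
  case (pCons a p b q)
  then show ?case by (simp add: Psi_pCons pcompose_add algebra_simps)
qed

lemma Psi_uminus: "Psi P Y (- F) = - Psi P Y F"
  by (induct F) (simp_all add: Psi_pCons pcompose_uminus)

lemma Psi_diff: "Psi P Y (F - G) = Psi P Y F - Psi P Y G"
  using Psi_add[of P Y F "-G"] by (simp add: Psi_uminus)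

lemma Psi_smult: "Psi P Y (smult a G) = pcompose a Y * Psi P Y G"
  by (induct G) (simp_all add: Psi_pCons pcompose_mult algebra_simps)

lemma Psi_mult: "Psi P Y (F * G) = Psi P Y F * Psi P Y G"
  by (induct F arbitrary: G) (simp_all add: Psi_add Psi_smult Psi_pCons algebra_simps)

lemma Psi_1: "Psi P Y 1 = 1"
  by (simp add: one_pCons Psi_pCons pcompose_1)

lemma Psi_const: "Psi P Y [:a:] = pcompose a Y"
  by (simp add: Psi_pCons)

lemma sec_cong:
  fixes P Y c :: "'a::field poly"
  assumes "P dvd Y - [:0,1:]"
  shows "P dvd pcompose c Y - c"
  using dvd_trans[OF assms dvd_pcompose_diff[of Y "[:0,1:]" c]] by simp

lemma sec_kill:
  fixes P Y c :: "'a::field poly"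
  assumes "P^k dvd pcompose P Y" "P dvd c"
  shows "P^k dvd pcompose c Y"
proof -
  obtain h where "c = P * h" using assms(2) by (auto simp: dvd_def)
  then have "pcompose c Y = pcompose P Y * pcompose h Y" by (simp add: pcompose_mult)
  then show ?thesis using assms(1) by simp
qed

lemma sec_kill2:
  fixes P Y c :: "'a::field poly"
  assumes "P^k dvd pcompose P Y" "P dvd c - d"
  shows "P^k dvd pcompose c Y - pcompose d Y"
  using sec_kill[OF assms] by (simp add: pcompose_diff)

lemma Psi_uniq:
  fixes P Y :: "'a::field poly"
  assumes P0: "P \<noteq> 0" and Y: "P dvd Y - [:0,1:]" "P^k dvd pcompose P Y"
  shows "m \<le> k \<Longrightarrow> P^m dvd Psi P Y H \<Longrightarrow> j < m \<Longrightarrow> P dvd coeff H j"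
proof (induction m arbitrary: H j)
  case 0
  then show ?case by simp
next
  case (Suc m)
  obtain a H' where H: "H = pCons a H'" by (cases H)
  have "P dvd P^Suc m" by simp
  then have "P dvd Psi P Y H" using Suc.prems(2) dvd_trans by blast
  then have "P dvd pcompose a Y" unfolding H Psi_pCons by (simp add: dvd_add_left_iff)
  moreover have "P dvd pcompose a Y - a" using Y(1) by (rule sec_cong)
  ultimately have "P dvd pcompose a Y - (pcompose a Y - a)" by (rule dvd_diff)
  then have Pa: "P dvd a" by simp
  have "P^k dvd pcompose a Y" using Y(2) Pa by (rule sec_kill)
  moreover have "P^Suc m dvd P^k" using Suc.prems(1) by (rule le_imp_power_dvd)
  ultimately have "P^Suc m dvd pcompose a Y" using dvd_trans by blast
  then have "P^Suc m dvd P * Psi P Y H'" using Suc.prems(2) unfolding H Psi_pCons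
    by (simp add: dvd_add_right_iff)
  then have "P^m dvd Psi P Y H'" using P0 by simp
  note IH = Suc.IH[OF _ this]
  show ?case
  proof (cases j)
    case 0
    then show ?thesis using Pa H by simp
  next
    case (Suc j')
    then show ?thesis using IH[of j'] Suc.prems H by simp
  qed
qed

lemma Psi_uniq_conv:
  fixes P Y :: "'a::field poly"
  assumes Y: "P^k dvd pcompose P Y"
  shows "m \<le> k \<Longrightarrow> (\<forall>j<m. P dvd coeff H j) \<Longrightarrow> P^m dvd Psi P Y H"
proof (induction m arbitrary: H)
  case 0
  then show ?case by simp
next
  case (Suc m)
  obtain a H' where H: "H = pCons a H'" by (cases H)
  have "P dvd coeff H 0" using Suc.prems(2) by simp
  then have "P dvd a" using H by simp
  then have "P^k dvd pcompose a Y" by (rule sec_kill[OF Y])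
  moreover have "P^Suc m dvd P^k" using Suc.prems(1) by (rule le_imp_power_dvd)
  ultimately have A: "P^Suc m dvd pcompose a Y" using dvd_trans by blast
  have "\<forall>j<m. P dvd coeff H' j"
  proof (intro allI impI)
    fix j assume "j < m"
    then have "P dvd coeff H (Suc j)" using Suc.prems(2) by simp
    then show "P dvd coeff H' j" using H by simp
  qed
  then have "P^m dvd Psi P Y H'" using Suc.IH Suc.prems(1) by simp
  then have "P^Suc m dvd P * Psi P Y H'" by simp
  then show ?case using A H by (simp add: Psi_pCons)
qed

lemma Psi_exist:
  fixes P Y :: "'a::field poly"
  assumes Y: "P dvd Y - [:0,1:]"
  shows "\<exists>F. P^m dvd a - Psi P Y F"
proof (induction m arbitrary: a)
  case 0
  then show ?case by simp
next
  case (Suc m)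
  have "P dvd a - pcompose a Y" using sec_cong[OF Y, of a] by (simp add: dvd_diff_commute)
  then obtain b where b: "a - pcompose a Y = P * b" by (auto simp: dvd_def)
  obtain G where G: "P^m dvd b - Psi P Y G" using Suc.IH by blast
  have "a - Psi P Y (pCons a G) = P * (b - Psi P Y G)"
    using b by (simp add: Psi_pCons algebra_simps)
  then have "P^Suc m dvd a - Psi P Y (pCons a G)" using G by simp
  then show ?case by blast
qed

lemma dvd_diff_trans:
  fixes Q a b c :: "'a::comm_ring_1"
  shows "Q dvd a - b \<Longrightarrow> Q dvd b - c \<Longrightarrow> Q dvd a - c"
  using dvd_add[of Q "a - b" "b - c"] by simp

lemma dvd_sub_l:
  fixes Q x y :: "'a::comm_ring_1"
  shows "Q dvd x \<Longrightarrow> Q dvd x - y \<Longrightarrow> Q dvd y"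
  using dvd_diff[of Q x "x - y"] by simp

lemma dvd_sub_r:
  fixes Q x y :: "'a::comm_ring_1"
  shows "Q dvd y \<Longrightarrow> Q dvd x - y \<Longrightarrow> Q dvd x"
  using dvd_add[of Q "x - y" y] by simp

lemma chom_add: "chom P Q f \<Longrightarrow> Q dvd f (a+b) - (f a + f b)"
  unfolding chom_def by blast
lemma chom_mult: "chom P Q f \<Longrightarrow> Q dvd f (a*b) - f a * f b"
  unfolding chom_def by blast
lemma chom_one: "chom P Q f \<Longrightarrow> Q dvd f 1 - 1"
  unfolding chom_def by blast
lemma chom_compat: "chom P Q f \<Longrightarrow> P dvd a - b \<Longrightarrow> Q dvd f a - f b"
  unfolding chom_def by blast

lemma chom_0: "chom P Q f \<Longrightarrow> Q dvd f 0"
  using chom_add[of P Q f 0 0] by simp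

lemma chom_diff:
  assumes "chom P Q f" shows "Q dvd f (a - b) - (f a - f b)"
proof -
  have "Q dvd f ((a - b) + b) - (f (a - b) + f b)" by (rule chom_add[OF assms])
  moreover have "f (a - b) - (f a - f b) = - (f (a - b + b) - (f (a - b) + f b))" by simp
  ultimately show ?thesis by (simp only: dvd_minus_iff)
qed

lemma chom_pow:
  assumes "chom P Q f" shows "Q dvd f (a ^ n) - f a ^ n"
proof (induction n)
  case 0
  then show ?case using chom_one[OF assms] by simp
next
  case (Suc n)
  have "Q dvd f (a * a^n) - f a * f (a^n)" by (rule chom_mult[OF assms])
  moreover have "Q dvd f a * f (a^n) - f a * f a ^ n"
    using Suc by (metis dvd_mult right_diff_distrib)
  ultimately show ?case using dvd_diff_trans by simp blast
qed

lemma chom_sum: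
  assumes "chom P Q f" "finite A"
  shows "Q dvd f (sum g A) - sum (\<lambda>i. f (g i)) A"
  using assms(2)
proof (induction A rule: finite_induct)
  case empty
  then show ?case using chom_0[OF assms(1)] by simp
next
  case (insert x F)
  have "Q dvd f (g x + sum g F) - (f (g x) + f (sum g F))" by (rule chom_add[OF assms(1)])
  moreover have "f (g x) + f (sum g F) - (f (g x) + sum (\<lambda>i. f (g i)) F)
       = f (sum g F) - sum (\<lambda>i. f (g i)) F" by simp
  ultimately have "Q dvd f (g x + sum g F) - (f (g x) + sum (\<lambda>i. f (g i)) F)"
    using insert(3) dvd_diff_trans by metis
  then show ?case using insert(1,2) by simp
qed

lemma chom_root:
  fixes P Q :: "'a::field poly"
  assumes f: "chom (P^k) (Q^k) f" and k: "k \<ge> 1" and irr: "irreducible Q"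
  shows "chom P Q f"
proof -
  have QQ: "Q dvd Q^k" using k by (intro dvd_power) simp
  have PP: "P dvd P^k" using k by (intro dvd_power) simp
  show ?thesis unfolding chom_def
  proof (intro conjI allI impI)
    fix a b
    show "Q dvd f (a + b) - (f a + f b)" using chom_add[OF f] QQ dvd_trans by blast
    show "Q dvd f (a * b) - f a * f b" using chom_mult[OF f] QQ dvd_trans by blast
  next
    show "Q dvd f 1 - 1" using chom_one[OF f] QQ dvd_trans by blast
  next
    fix a b assume ab: "P dvd a - b"
    have "P^k dvd (a - b)^k - 0" using ab by (simp add: dvd_power_same)
    then have "Q^k dvd f ((a - b)^k) - f 0" by (rule chom_compat[OF f])
    moreover have "Q^k dvd f 0" by (rule chom_0[OF f])
    ultimately have "Q^k dvd f ((a - b)^k)" by (rule dvd_sub_r[rotated])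
    moreover have "Q^k dvd f ((a - b)^k) - f (a - b) ^ k" by (rule chom_pow[OF f])
    ultimately have "Q^k dvd f (a - b) ^ k" by (rule dvd_sub_l)
    then have "Q dvd f (a - b) ^ k" using QQ dvd_trans by blast
    then have "Q dvd f (a - b)" using irr irred_pow by blast
    moreover have "Q dvd f (a - b) - (f a - f b)" using chom_diff[OF f] QQ dvd_trans by blast
    ultimately show "Q dvd f a - f b" by (rule dvd_sub_l)
  qed
qed

definition ceq :: "'a::field poly \<Rightarrow> nat \<Rightarrow> 'a poly poly \<Rightarrow> 'a poly poly \<Rightarrow> bool" where
  "ceq P k F G \<longleftrightarrow> (\<forall>j<k. P dvd coeff F j - coeff G j)"

lemma ceq_refl: "ceq P k F F" by (simp add: ceq_def)
lemma ceq_sym: "ceq P k F G \<Longrightarrow> ceq P k G F"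
  unfolding ceq_def by (metis dvd_diff_commute)
lemma ceq_trans: "ceq P k F G \<Longrightarrow> ceq P k G H \<Longrightarrow> ceq P k F H"
  unfolding ceq_def using dvd_diff_trans by blast

definition E :: "'a::field poly \<Rightarrow> 'a poly \<Rightarrow> nat \<Rightarrow> 'a poly \<Rightarrow> 'a poly poly" where
  "E P Y k a = (SOME F. P^k dvd a - Psi P Y F)"

lemma E_spec:
  fixes P Y :: "'a::field poly"
  assumes "P dvd Y - [:0,1:]"
  shows "P^k dvd a - Psi P Y (E P Y k a)"
  unfolding E_def using Psi_exist[OF assms, of k a] by (rule someI_ex)

lemma dvd_prod_cong:
  fixes Q a b A B :: "'a::comm_ring_1"
  assumes "Q dvd a - A" "Q dvd b - B"
  shows "Q dvd a * b - A * B"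
proof -
  have "a * b - A * B = a * (b - B) + B * (a - A)" by (simp add: algebra_simps)
  then show ?thesis using assms by (metis dvd_add dvd_mult)
qed

locale good =
  fixes P Y :: "'a::field poly" and k :: nat
  assumes P0: "P \<noteq> 0" and Y1: "P dvd Y - [:0,1:]" and Y2: "P^k dvd pcompose P Y"
begin

lemma K1: "P^k dvd Psi P Y F - Psi P Y G \<Longrightarrow> ceq P k F G"
  unfolding ceq_def using Psi_uniq[OF P0 Y1 Y2, of k "F - G"] by (simp add: Psi_diff)

lemma K2: "ceq P k F G \<Longrightarrow> P^k dvd Psi P Y F - Psi P Y G"
  unfolding ceq_def using Psi_uniq_conv[OF Y2, of k "F - G"] by (simp add: Psi_diff)

lemma Es: "P^k dvd a - Psi P Y (E P Y k a)"
  by (rule E_spec[OF Y1])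

lemma K3: "ceq P k (E P Y k (Psi P Y F)) F"
  by (rule K1) (metis Es dvd_diff_commute)

lemma K4: "P^k dvd a - b \<Longrightarrow> ceq P k (E P Y k a) (E P Y k b)"
proof (rule K1)
  assume "P^k dvd a - b"
  have "P^k dvd Psi P Y (E P Y k a) - a" using Es[of a] by (simp add: dvd_diff_commute)
  then have "P^k dvd Psi P Y (E P Y k a) - b" using \<open>P^k dvd a - b\<close> dvd_diff_trans by blast
  then show "P^k dvd Psi P Y (E P Y k a) - Psi P Y (E P Y k b)" using Es[of b] dvd_diff_trans by blast
qed

lemma E_add: "ceq P k (E P Y k (a + b)) (E P Y k a + E P Y k b)"
proof (rule K1)
  have "P^k dvd Psi P Y (E P Y k (a+b)) - (a + b)" using Es[of "a+b"] by (simp add: dvd_diff_commute)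
  moreover have "P^k dvd (a + b) - (Psi P Y (E P Y k a) + Psi P Y (E P Y k b))"
    using dvd_add[OF Es[of a] Es[of b]] by (simp add: algebra_simps)
  ultimately show "P^k dvd Psi P Y (E P Y k (a+b)) - Psi P Y (E P Y k a + E P Y k b)"
    unfolding Psi_add using dvd_diff_trans by blast
qed

lemma E_mult: "ceq P k (E P Y k (a * b)) (E P Y k a * E P Y k b)"
proof (rule K1)
  have "P^k dvd Psi P Y (E P Y k (a*b)) - (a * b)" using Es[of "a*b"] by (simp add: dvd_diff_commute)
  moreover
  have "P^k dvd (a * b) - (Psi P Y (E P Y k a) * Psi P Y (E P Y k b))"
    by (rule dvd_prod_cong[OF Es Es])
  ultimately show "P^k dvd Psi P Y (E P Y k (a*b)) - Psi P Y (E P Y k a * E P Y k b)"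
    unfolding Psi_mult using dvd_diff_trans by blast
qed

lemma E_1: "ceq P k (E P Y k 1) 1"
  by (rule K1) (metis Es Psi_1 dvd_diff_commute)

end

lemma M1:
  assumes f: "chom P Q f" "f 0 = 0" and "ceq P k F G"
  shows "ceq Q k (map_poly f F) (map_poly f G)"
  using assms(3) unfolding ceq_def by (simp add: coeff_map_poly f chom_compat[OF f(1)])

lemma M2:
  assumes f: "chom P Q f" "f 0 = 0"
  shows "ceq Q k (map_poly f (F + G)) (map_poly f F + map_poly f G)"
  unfolding ceq_def by (simp add: coeff_map_poly f chom_add[OF f(1)])

lemma M3:
  assumes f: "chom P Q f" "f 0 = 0"
  shows "ceq Q k (map_poly f (F * G)) (map_poly f F * map_poly f G)"
  unfolding ceq_def
proof (intro allI impI)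
  fix j
  have "Q dvd f (\<Sum>i\<le>j. coeff F i * coeff G (j - i)) - (\<Sum>i\<le>j. f (coeff F i * coeff G (j - i)))"
    by (rule chom_sum[OF f(1)]) simp
  moreover have "Q dvd (\<Sum>i\<le>j. f (coeff F i * coeff G (j - i))) - (\<Sum>i\<le>j. f (coeff F i) * f (coeff G (j - i)))"
    unfolding sum_subtractf[symmetric] by (rule dvd_sum) (rule chom_mult[OF f(1)])
  ultimately show "Q dvd coeff (map_poly f (F * G)) j - coeff (map_poly f F * map_poly f G) j"
    by (simp add: coeff_map_poly f coeff_mult) (rule dvd_diff_trans)
qed

lemma M4:
  assumes f: "chom P Q f" "f 0 = 0"
  shows "ceq Q k (map_poly f 1) 1"
  unfolding ceq_def
proof (intro allI impI)
  fix j
  show "Q dvd coeff (map_poly f 1) j - coeff 1 j"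
    using chom_one[OF f(1)] by (cases j) (simp_all add: coeff_map_poly f coeff_1)
qed

lemma M5:
  assumes g: "g 0 = 0" and f: "f 0 = 0" and gf: "\<And>a. P dvd g (f a) - a"
  shows "ceq P k (map_poly g (map_poly f F)) F"
  unfolding ceq_def by (simp add: coeff_map_poly f g gf)

definition Phi :: "'a::field poly \<Rightarrow> 'a poly \<Rightarrow> 'a poly \<Rightarrow> 'a poly \<Rightarrow> nat \<Rightarrow> ('a poly \<Rightarrow> 'a poly) \<Rightarrow> 'a poly \<Rightarrow> 'a poly" where
  "Phi P Y Q Z k f a = Psi Q Z (map_poly f (E P Y k a))"

lemma Phi_chom:
  assumes gP: "good P Y k" and gQ: "good Q Z k" and f: "chom P Q f" "f 0 = 0"
  shows "chom (P^k) (Q^k) (Phi P Y Q Z k f)"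
proof -
  interpret p: good P Y k by fact
  interpret q: good Q Z k by fact
  show ?thesis unfolding chom_def Phi_def
  proof (intro conjI allI impI)
    fix a b
    have c1: "ceq Q k (map_poly f (E P Y k (a + b))) (map_poly f (E P Y k a) + map_poly f (E P Y k b))"
      using M1[OF f p.E_add] M2[OF f] ceq_trans by blast
    show "Q^k dvd Psi Q Z (map_poly f (E P Y k (a + b))) -
        (Psi Q Z (map_poly f (E P Y k a)) + Psi Q Z (map_poly f (E P Y k b)))"
      using q.K2[OF c1] by (simp add: Psi_add)
    have c2: "ceq Q k (map_poly f (E P Y k (a * b))) (map_poly f (E P Y k a) * map_poly f (E P Y k b))"
      using M1[OF f p.E_mult] M3[OF f] ceq_trans by blast
    show "Q^k dvd Psi Q Z (map_poly f (E P Y k (a * b))) -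
        Psi Q Z (map_poly f (E P Y k a)) * Psi Q Z (map_poly f (E P Y k b))"
      using q.K2[OF c2] by (simp add: Psi_mult)
  next
    have c3: "ceq Q k (map_poly f (E P Y k 1)) 1"
      using M1[OF f p.E_1] M4[OF f] ceq_trans by blast
    show "Q^k dvd Psi Q Z (map_poly f (E P Y k 1)) - 1"
      using q.K2[OF c3] by (simp add: Psi_1)
  next
    fix a b assume "P^k dvd a - b"
    then have "ceq Q k (map_poly f (E P Y k a)) (map_poly f (E P Y k b))"
      using M1[OF f p.K4] by blast
    then show "Q^k dvd Psi Q Z (map_poly f (E P Y k a)) - Psi Q Z (map_poly f (E P Y k b))"
      by (rule q.K2)
  qed
qed

lemma Phi_inv:
  assumes gP: "good P Y k" and gQ: "good Q Z k" and g: "chom Q P g" "g 0 = 0" and f: "f 0 = 0"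
    and gf: "\<And>a. P dvd g (f a) - a"
  shows "P^k dvd Phi Q Z P Y k g (Phi P Y Q Z k f a) - a"
proof -
  interpret p: good P Y k by fact
  interpret q: good Q Z k by fact
  define H where "H = map_poly f (E P Y k a)"
  have "ceq P k (map_poly g (E Q Z k (Psi Q Z H))) (map_poly g H)"
    using M1[OF g q.K3] .
  moreover have "ceq P k (map_poly g H) (E P Y k a)" unfolding H_def by (rule M5[OF g(2) f gf])
  ultimately have "ceq P k (map_poly g (E Q Z k (Psi Q Z H))) (E P Y k a)" by (rule ceq_trans)
  then have "P^k dvd Phi Q Z P Y k g (Phi P Y Q Z k f a) - Psi P Y (E P Y k a)"
    unfolding Phi_def H_def[symmetric] by (rule p.K2)
  moreover have "P^k dvd Psi P Y (E P Y k a) - a" using p.Es[of a] by (simp add: dvd_diff_commute)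
  ultimately show ?thesis by (rule dvd_diff_trans)
qed

lemma chom_fix0:
  assumes f: "chom P Q f"
  shows "chom P Q (\<lambda>c. if c = 0 then 0 else f c)" and "Q dvd (if c = 0 then 0 else f c) - f c"
proof -
  have d: "Q dvd (if c = 0 then 0 else f c) - f c" for c
    using chom_0[OF f] by auto
  then show "Q dvd (if c = 0 then 0 else f c) - f c" .
  show "chom P Q (\<lambda>c. if c = 0 then 0 else f c)" unfolding chom_def
  proof (intro conjI allI impI)
    fix a b
    have "Q dvd (if a + b = 0 then 0 else f (a + b)) - f (a + b)" by (rule d)
    moreover have "Q dvd f (a + b) - (f a + f b)" by (rule chom_add[OF f])
    moreover have "Q dvd (f a + f b) - ((if a = 0 then 0 else f a) + (if b = 0 then 0 else f b))"
      using dvd_add[OF d[of a] d[of b]] by (simp add: dvd_diff_commute algebra_simps)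
    ultimately show "Q dvd (if a + b = 0 then 0 else f (a + b)) -
       ((if a = 0 then 0 else f a) + (if b = 0 then 0 else f b))" using dvd_diff_trans by blast
    have "Q dvd (if a * b = 0 then 0 else f (a * b)) - f (a * b)" by (rule d)
    moreover have "Q dvd f (a * b) - (f a * f b)" by (rule chom_mult[OF f])
    moreover have "Q dvd (f a * f b) - ((if a = 0 then 0 else f a) * (if b = 0 then 0 else f b))"
      using dvd_prod_cong[OF d[of a] d[of b]] by (simp add: dvd_diff_commute)
    ultimately show "Q dvd (if a * b = 0 then 0 else f (a * b)) -
       (if a = 0 then 0 else f a) * (if b = 0 then 0 else f b)" using dvd_diff_trans by blast
  next
    show "Q dvd (if (1::'a poly) = 0 then 0 else f 1) - 1" using chom_one[OF f] by simp
  next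
    fix a b assume "P dvd a - b"
    then have "Q dvd f a - f b" by (rule chom_compat[OF f])
    then show "Q dvd (if a = 0 then 0 else f a) - (if b = 0 then 0 else f b)"
      using d[of a] d[of b] dvd_diff_trans by (metis dvd_diff_commute)
  qed
qed

theorem mainTheorem6:
  fixes P1 P2 :: "'a::field poly" and k :: nat
  assumes "irreducible P1" and "irreducible P2"
    and "pderiv P1 \<noteq> 0" and "pderiv P2 \<noteq> 0"
    and "k \<ge> 1"
  shows "(Kx Quot (PIdl\<^bsub>Kx\<^esub> (P1 ^ k)) \<simeq> Kx Quot (PIdl\<^bsub>Kx\<^esub> (P2 ^ k)))
     \<longleftrightarrow> (Kx Quot (PIdl\<^bsub>Kx\<^esub> P1) \<simeq> Kx Quot (PIdl\<^bsub>Kx\<^esub> P2))"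
proof
  assume "Kx Quot (PIdl\<^bsub>Kx\<^esub> (P1 ^ k)) \<simeq> Kx Quot (PIdl\<^bsub>Kx\<^esub> (P2 ^ k))"
  then obtain f g where fg: "chom (P1^k) (P2^k) f" "chom (P2^k) (P1^k) g"
      "\<And>a. P1^k dvd g (f a) - a" "\<And>c. P2^k dvd f (g c) - c"
    unfolding iso_iff_chom by blast
  have d1: "P1 dvd P1^k" "P2 dvd P2^k" using assms(5) by (simp_all add: dvd_power)
  have "chom P1 P2 f" by (rule chom_root[OF fg(1) assms(5) assms(2)])
  moreover have "chom P2 P1 g" by (rule chom_root[OF fg(2) assms(5) assms(1)])
  moreover have "\<forall>a. P1 dvd g (f a) - a" using fg(3) d1(1) dvd_trans by blast
  moreover have "\<forall>c. P2 dvd f (g c) - c" using fg(4) d1(2) dvd_trans by blast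
  ultimately show "Kx Quot (PIdl\<^bsub>Kx\<^esub> P1) \<simeq> Kx Quot (PIdl\<^bsub>Kx\<^esub> P2)"
    unfolding iso_iff_chom by blast
next
  assume "Kx Quot (PIdl\<^bsub>Kx\<^esub> P1) \<simeq> Kx Quot (PIdl\<^bsub>Kx\<^esub> P2)"
  then obtain f g where fg: "chom P1 P2 f" "chom P2 P1 g"
      "\<And>a. P1 dvd g (f a) - a" "\<And>c. P2 dvd f (g c) - c"
    unfolding iso_iff_chom by blast
  define f0 where "f0 = (\<lambda>c. if c = 0 then 0 else f c)"
  define g0 where "g0 = (\<lambda>c. if c = 0 then 0 else g c)"
  have f0: "chom P1 P2 f0" "f0 0 = 0" "\<And>c. P2 dvd f0 c - f c"
    unfolding f0_def using chom_fix0[OF fg(1)] by auto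
  have g0: "chom P2 P1 g0" "g0 0 = 0" "\<And>c. P1 dvd g0 c - g c"
    unfolding g0_def using chom_fix0[OF fg(2)] by auto
  have gf0: "P1 dvd g0 (f0 a) - a" for a
  proof -
    have "P1 dvd g (f0 a) - g (f a)" by (rule chom_compat[OF fg(2) f0(3)])
    then have "P1 dvd g0 (f0 a) - g (f a)" using g0(3) dvd_diff_trans by blast
    then show ?thesis using fg(3) dvd_diff_trans by blast
  qed
  have fg0: "P2 dvd f0 (g0 c) - c" for c
  proof -
    have "P2 dvd f (g0 c) - f (g c)" by (rule chom_compat[OF fg(1) g0(3)])
    then have "P2 dvd f0 (g0 c) - f (g c)" using f0(3) dvd_diff_trans by blast
    then show ?thesis using fg(4) dvd_diff_trans by blast
  qed
  obtain Y1 where Y1: "P1 dvd Y1 - [:0,1:]" "P1^k dvd pcompose P1 Y1"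
    using hensel[OF assms(1) assms(3) assms(5)] by blast
  obtain Y2 where Y2: "P2 dvd Y2 - [:0,1:]" "P2^k dvd pcompose P2 Y2"
    using hensel[OF assms(2) assms(4) assms(5)] by blast
  have n0: "P1 \<noteq> 0" "P2 \<noteq> 0" using assms(1,2) by auto
  have g1: "good P1 Y1 k" by (rule good.intro[OF n0(1) Y1])
  have g2: "good P2 Y2 k" by (rule good.intro[OF n0(2) Y2])
  have "chom (P1^k) (P2^k) (Phi P1 Y1 P2 Y2 k f0)" by (rule Phi_chom[OF g1 g2 f0(1,2)])
  moreover have "chom (P2^k) (P1^k) (Phi P2 Y2 P1 Y1 k g0)" by (rule Phi_chom[OF g2 g1 g0(1,2)])
  moreover have "\<forall>a. P1^k dvd Phi P2 Y2 P1 Y1 k g0 (Phi P1 Y1 P2 Y2 k f0 a) - a"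
    using Phi_inv[OF g1 g2 g0(1,2) f0(2) gf0] by blast
  moreover have "\<forall>c. P2^k dvd Phi P1 Y1 P2 Y2 k f0 (Phi P2 Y2 P1 Y1 k g0 c) - c"
    using Phi_inv[OF g2 g1 f0(1,2) g0(2) fg0] by blast
  ultimately show "Kx Quot (PIdl\<^bsub>Kx\<^esub> (P1 ^ k)) \<simeq> Kx Quot (PIdl\<^bsub>Kx\<^esub> (P2 ^ k))"
    unfolding iso_iff_chom by blast
qed

end
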